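(* Let $A$ be a finite abelian group of order $n$ which is not a $2$-group, and let $S$ be a random inverse-closed subset of $A$ chosen as in the model below, with $\frac{25(\log n)^2}{n}\le p\le \frac12$. Then the probability that there exist subgroups $H,K$ of $A$ with $\{0\}\ne H\le K\lneq A$ such that $S\setminus K$ is a union of cosets of $H$ is $O(\exp(-(\log n)^2))$ as $n\to\infty$.
   Context: Random model: given a finite abelian group $A$ (written additively) and $0<p<1$, a random subset $S\subseteq A\setminus\{0\}$ is formed as follows: each element $g\in A$ of order exactly $2$ is put into $S$ independently with probability $p$, and for each pair $\{x,-x\}$ with $x\ne -x$, both $x$ and $-x$ are put into $S$ with probability $p$ (and neither otherwise), all these choices being independent. Thus $S=-S$ and $0\notin S$. $\log$ denotes $\log_2$. *)

theory Defs
  imports Complex_Main "HOL-Algebra.Multiplicative_Group"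
begin

text \<open>HOL-Algebra groups are written multiplicatively: the paper's 0 is the unit
 and -x is the inverse.\<close>

definition two_group :: "('a, 'b) monoid_scheme \<Rightarrow> bool" where
  "two_group G \<longleftrightarrow> (\<forall>x \<in> carrier G. \<exists>k::nat. group.ord G x = 2 ^ k)"

text \<open>The independent units of the random model: the sets {x, -x} for x nonzero
 (singletons for elements of order 2, pairs otherwise).\<close>
definition inv_orbits :: "('a, 'b) monoid_scheme \<Rightarrow> 'a set set" where
  "inv_orbits G = (\<lambda>x. {x, inv\<^bsub>G\<^esub> x}) ` (carrier G - {\<one>\<^bsub>G\<^esub>})"

definition rand_prob :: "('a, 'b) monoid_scheme \<Rightarrow> real \<Rightarrow> ('a set \<Rightarrow> bool) \<Rightarrow> real" where
  "rand_prob G p E =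
     (\<Sum>T \<in> {T. T \<subseteq> inv_orbits G \<and> E (\<Union>T)}.
        p ^ card T * (1 - p) ^ (card (inv_orbits G) - card T))"

definition bad_event :: "('a, 'b) monoid_scheme \<Rightarrow> 'a set \<Rightarrow> bool" where
  "bad_event G S \<longleftrightarrow>
     (\<exists>H K. subgroup H G \<and> subgroup K G \<and> H \<noteq> {\<one>\<^bsub>G\<^esub>} \<and> H \<subseteq> K \<and> K \<noteq> carrier G \<and>
        (\<exists>C \<subseteq> rcosets\<^bsub>G\<^esub> H. S - K = \<Union>C))"

end

theory Submission
  imports Defs
begin


definition wt :: "'x set \<Rightarrow> real \<Rightarrow> 'x set \<Rightarrow> real" where
  "wt Om p T = p ^ card T * (1 - p) ^ (card Om - card T)"

lemma split_sum:
  assumes fin: "finite Om" and BO: "B \<subseteq> Om"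
  shows "(\<Sum>T\<in>{T. T \<subseteq> Om \<and> Q (T \<inter> B) \<and> R (T - B)}. wt Om p T) =
     (\<Sum>U\<in>{U. U \<subseteq> B \<and> Q U}. wt B p U) * (\<Sum>V\<in>{V. V \<subseteq> Om - B \<and> R V}. wt (Om - B) p V)"
proof -
  let ?UU = "{U. U \<subseteq> B \<and> Q U}" and ?VV = "{V. V \<subseteq> Om - B \<and> R V}"
  have finB: "finite B" using finite_subset[OF BO fin] .
  have fUU: "finite ?UU" using finB by simp
  have fVV: "finite ?VV" using fin by simp
  have "(\<Sum>U\<in>?UU. wt B p U) * (\<Sum>V\<in>?VV. wt (Om - B) p V) = (\<Sum>(U,V)\<in>?UU \<times> ?VV. wt B p U * wt (Om - B) p V)"
    by (simp add: sum_product sum.cartesian_product)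
  also have "\<dots> = (\<Sum>(U,V)\<in>?UU \<times> ?VV. wt Om p (U \<union> V))"
  proof (rule sum.cong[OF refl], clarify)
    fix U V assume U: "U \<subseteq> B" and V: "V \<subseteq> Om - B"
    have fU: "finite U" using finite_subset[OF U finB] .
    have fV: "finite V" using finite_subset[OF V finite_Diff[OF fin]] .
    have cU: "card U \<le> card B" using card_mono[OF finB U] .
    have cV: "card V \<le> card (Om - B)" using card_mono[OF finite_Diff[OF fin] V] .
    have cOB: "card (Om - B) = card Om - card B" using card_Diff_subset[OF finB BO] .
    have cBO: "card B \<le> card Om" using card_mono[OF fin BO] .
    have UV: "U \<inter> V = {}" using U V by blast
    have cUV: "card (U \<union> V) = card U + card V" using card_Un_disjoint[OF fU fV UV] .
    have e: "card Om - card (U \<union> V) = (card B - card U) + (card (Om - B) - card V)"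
      using cU cV cOB cBO cUV by linarith
    have "wt Om p (U \<union> V) = p^(card U + card V) * (1-p)^((card B - card U) + (card (Om-B) - card V))"
      unfolding wt_def using cUV e by simp
    then show "wt B p U * wt (Om - B) p V = wt Om p (U \<union> V)"
      unfolding wt_def by (simp add: power_add algebra_simps)
  qed
  also have "\<dots> = (\<Sum>T\<in>{T. T \<subseteq> Om \<and> Q (T \<inter> B) \<and> R (T - B)}. wt Om p T)"
  proof (rule sum.reindex_bij_witness[where i="\<lambda>T. (T \<inter> B, T - B)" and j="\<lambda>(U,V). U \<union> V"])
    fix a assume "a \<in> ?UU \<times> ?VV" then show "(\<lambda>T. (T \<inter> B, T - B)) ((\<lambda>(U,V). U \<union> V) a) = a"
      by (cases a) auto
  next
    fix a assume "a \<in> ?UU \<times> ?VV" then show "(\<lambda>(U,V). U \<union> V) a \<in> {T. T \<subseteq> Om \<and> Q (T \<inter> B) \<and> R (T - B)}"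
      apply (cases a) using BO apply clarsimp
      apply (subgoal_tac "(fst a \<union> snd a) \<inter> B = fst a \<and> (fst a \<union> snd a) - B = snd a")
       apply auto
      done
  qed (auto simp: BO)
  finally show ?thesis by simp
qed

lemma total_sum:
  assumes "finite Om"
  shows "(\<Sum>T\<in>{T. T \<subseteq> Om}. wt Om p T) = 1"
  using assms
proof (induction Om rule: finite_induct)
  case empty then show ?case by (simp add: wt_def)
next
  case (insert x F)
  have "(\<Sum>T\<in>{T. T \<subseteq> insert x F}. wt (insert x F) p T) =
        (\<Sum>T\<in>{T. T \<subseteq> insert x F \<and> True \<and> True}. wt (insert x F) p T)" by simp
  also have "\<dots> = (\<Sum>U\<in>{U. U \<subseteq> {x} \<and> True}. wt {x} p U) * (\<Sum>V\<in>{V. V \<subseteq> insert x F - {x} \<and> True}. wt (insert x F - {x}) p V)"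
    by (rule split_sum[where Q="\<lambda>_. True" and R="\<lambda>_. True"]) (use insert in auto)
  also have "insert x F - {x} = F" using insert by auto
  also have "{U. U \<subseteq> {x} \<and> True} = {{}, {x}}" by auto
  finally show ?case using insert by (simp add: wt_def)
qed

lemma pk_bound:
  fixes p :: real
  assumes "0 \<le> p" "p \<le> 1/2" "1 \<le> k"
  shows "p ^ k + (1 - p) ^ k \<le> (1 - p) ^ (k - 1)"
proof -
  obtain j where k: "k = Suc j" using assms(3) by (cases k) auto
  have "p ^ j \<le> (1 - p) ^ j" using assms by (intro power_mono) auto
  then have "p * p ^ j \<le> p * (1 - p) ^ j" using assms by (intro mult_left_mono) auto
  then show ?thesis using k by (simp add: algebra_simps)
qed

lemma wt_nonneg: "0 \<le> p \<Longrightarrow> p \<le> 1 \<Longrightarrow> 0 \<le> wt Om p T"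
  unfolding wt_def by simp

lemma block_bound:
  assumes "finite BB" "finite Om" "\<forall>B\<in>BB. B \<subseteq> Om \<and> 2 \<le> card B" "pairwise disjnt BB"
    "0 \<le> p" "p \<le> 1/2"
  shows "(\<Sum>T\<in>{T. T \<subseteq> Om \<and> (\<forall>B\<in>BB. B \<subseteq> T \<or> B \<inter> T = {})}. wt Om p T)
           \<le> (1 - p) ^ (\<Sum>B\<in>BB. card B - 1)"
  using assms
proof (induction BB arbitrary: Om rule: finite_induct)
  case empty
  then show ?case using total_sum[of Om p] by simp
next
  case (insert B F)
  have BOm: "B \<subseteq> Om" and cB: "2 \<le> card B" using insert by auto
  have disj: "\<forall>B'\<in>F. B' \<inter> B = {}" using insert(2,6)
    by (auto simp: pairwise_def disjnt_def)
  have setq: "{T. T \<subseteq> Om \<and> (\<forall>B\<in>insert B F. B \<subseteq> T \<or> B \<inter> T = {})} =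
     {T. T \<subseteq> Om \<and> (T \<inter> B = B \<or> T \<inter> B = {}) \<and> (\<forall>B'\<in>F. B' \<subseteq> T - B \<or> B' \<inter> (T - B) = {})}"
    using disj by blast
  have IH: "(\<Sum>T\<in>{T. T \<subseteq> Om - B \<and> (\<forall>B'\<in>F. B' \<subseteq> T \<or> B' \<inter> T = {})}. wt (Om - B) p T)
           \<le> (1 - p) ^ (\<Sum>B\<in>F. card B - 1)"
    using insert disj by (intro insert.IH) (auto simp: pairwise_insert)
  have Us: "{U. U \<subseteq> B \<and> (U = B \<or> U = {})} = {B, {}}" by auto
  have Bne: "B \<noteq> {}" using cB by auto
  have fB: "finite B" using cB card.infinite by fastforce
  have a: "(\<Sum>U\<in>{U. U \<subseteq> B \<and> (U = B \<or> U = {})}. wt B p U) = p ^ card B + (1-p) ^ card B"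
    unfolding Us using Bne by (simp add: wt_def)
  have "(\<Sum>T\<in>{T. T \<subseteq> Om \<and> (\<forall>B\<in>insert B F. B \<subseteq> T \<or> B \<inter> T = {})}. wt Om p T)
     = (p ^ card B + (1-p) ^ card B) *
       (\<Sum>T\<in>{T. T \<subseteq> Om - B \<and> (\<forall>B'\<in>F. B' \<subseteq> T \<or> B' \<inter> T = {})}. wt (Om - B) p T)"
    unfolding setq a[symmetric]
    by (rule split_sum[where Q="\<lambda>U. U = B \<or> U = {}" and R="\<lambda>V. \<forall>B'\<in>F. B' \<subseteq> V \<or> B' \<inter> V = {}"])
       (use insert BOm in auto)
  also have "\<dots> \<le> (1 - p) ^ (card B - 1) * (1 - p) ^ (\<Sum>B\<in>F. card B - 1)"
    using IH pk_bound[of p "card B"] insert cB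
    by (intro mult_mono) (auto intro!: sum_nonneg wt_nonneg)
  also have "\<dots> = (1 - p) ^ (\<Sum>B\<in>insert B F. card B - 1)"
  proof -
    have "(\<Sum>B\<in>insert B F. card B - 1) = (card B - 1) + (\<Sum>B\<in>F. card B - 1)"
      using insert by simp
    then show ?thesis by (simp add: power_add)
  qed
  finally show ?case .
qed



lemma two_odd_decomp: "(n::nat) > 0 \<Longrightarrow> \<exists>a b. n = 2^a * b \<and> odd b"
proof (induction n rule: less_induct)
  case (less n)
  show ?case
  proof (cases "even n")
    case True
    then obtain m where m: "n = 2 * m" by blast
    then have "m < n" "m > 0" using less by auto
    then obtain a b where "m = 2^a * b" "odd b" using less by blast
    then show ?thesis using m by (intro exI[of _ "Suc a"] exI[of _ b]) auto
  next
    case False then show ?thesis by (intro exI[of _ 0] exI[of _ n]) auto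
  qed
qed

context group begin

lemma card_proper_subgroup:
  assumes fin: "finite (carrier G)" and K: "subgroup K G" and ne: "K \<noteq> carrier G"
  shows "2 * card K \<le> order G"
proof -
  have L: "card (rcosets K) * card K = order G" using lagrange[OF K] .
  have pos: "order G > 0" using fin order_gt_0_iff_finite by blast
  have "card (rcosets K) \<noteq> 0" using L pos by (metis mult_zero_left less_irrefl)
  moreover have "card (rcosets K) \<noteq> 1"
  proof
    assume "card (rcosets K) = 1"
    then have "card K = card (carrier G)" using L by (simp add: order_def)
    then have "K = carrier G" using fin K subgroup.subset card_subset_eq by metis
    then show False using ne by simp
  qed
  ultimately have "card (rcosets K) \<ge> 2" by linarith
  then show ?thesis using L by (metis mult_le_mono1)
qed

lemma subgroup_card_dvd:
  assumes fin: "finite (carrier G)" and J: "subgroup J G" and J': "subgroup J' G" and sub: "J \<subseteq> J'"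
  shows "card J dvd card J'"
proof -
  interpret G': group "G\<lparr>carrier := J'\<rparr>" using subgroup.subgroup_is_group[OF J' group_axioms] .
  have "subgroup J (G\<lparr>carrier := J'\<rparr>)" using subgroup_incl[OF J J' sub] .
  from G'.lagrange[OF this] show ?thesis by (simp add: order_def) (metis dvd_triv_right)
qed


end


context group begin
lemma generators_exist:
  assumes fin: "finite (carrier G)" and K: "subgroup K G"
  shows "\<exists>xs. set xs \<subseteq> K \<and> 2 ^ length xs \<le> card K \<and> generate G (set xs) = K"
proof -
  have finK: "finite K" using fin K subgroup.subset finite_subset by blast
  have main: "\<forall>ys. set ys \<subseteq> K \<and> 2 ^ length ys \<le> card (generate G (set ys)) \<and>
      card K - card (generate G (set ys)) = j \<longrightarrow>
      (\<exists>xs. set xs \<subseteq> K \<and> 2 ^ length xs \<le> card K \<and> generate G (set xs) = K)" for j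
  proof (induction j rule: less_induct)
    case (less j)
    show ?case
    proof (intro allI impI)
      fix ys assume ys: "set ys \<subseteq> K \<and> 2 ^ length ys \<le> card (generate G (set ys)) \<and>
        card K - card (generate G (set ys)) = j"
      let ?J = "generate G (set ys)"
      have JK: "?J \<subseteq> K" using generate_subgroup_incl[OF _ K] ys by blast
      have Jsg: "subgroup ?J G" using generate_is_subgroup ys K subgroup.subset by blast
      show "\<exists>xs. set xs \<subseteq> K \<and> 2 ^ length xs \<le> card K \<and> generate G (set xs) = K"
      proof (cases "?J = K")
        case True then show ?thesis using ys by (intro exI[of _ ys]) simp
      next
        case False
        then obtain y where y: "y \<in> K" "y \<notin> ?J" using JK by blast
        let ?J' = "generate G (set (y # ys))"
        have J'K: "?J' \<subseteq> K" using generate_subgroup_incl[OF _ K] ys y by auto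
        have J'sg: "subgroup ?J' G"
          by (rule generate_is_subgroup) (use ys y K subgroup.subset in auto)
        have JJ': "?J \<subseteq> ?J'" by (rule mono_generate) auto
        have yJ': "y \<in> ?J'" by (rule generate.incl) auto
        have fJ': "finite ?J'" using finK J'K finite_subset by blast
        have ps: "?J \<subset> ?J'" using JJ' yJ' y(2) by blast
        have lt: "card ?J < card ?J'" using psubset_card_mono[OF fJ' ps] .
        have dv: "card ?J dvd card ?J'" using subgroup_card_dvd[OF fin Jsg J'sg JJ'] .
        have "card ?J' \<ge> 2 * card ?J"
        proof -
          obtain c where c: "card ?J' = card ?J * c" using dv by blast
          have "c \<noteq> 0" using c lt by auto
          moreover have "c \<noteq> 1" using c lt by auto
          ultimately have "c \<ge> 2" by linarith
          then show ?thesis using c by (metis mult.commute mult_le_mono2)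
        qed
        then have pw: "2 ^ length (y # ys) \<le> card ?J'" using ys by simp
        have cJ'K: "card ?J' \<le> card K" using J'K finK card_mono by blast
        have lj: "card K - card ?J' < j" using ys lt cJ'K by linarith
        have yK: "set (y # ys) \<subseteq> K" using ys y by auto
        show ?thesis using less.IH[OF lj, rule_format, of "y # ys"] yK pw by blast
      qed
    qed
  qed
  have g0: "generate G (set []) = {\<one>}" using generate_empty by simp
  have "card K \<ge> 1" using K subgroup.one_closed finK by (metis card_0_eq empty_iff less_one not_le)
  then show ?thesis using main[of "card K - 1", rule_format, of "[]"] g0 by simp
qed
end


context group begin

lemma pow_coprime_one:
  assumes "c \<in> carrier G" "c [^] (m::nat) = \<one>" "c [^] (n::nat) = \<one>" "coprime m n"
  shows "c = \<one>"
proof -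
  have "ord c dvd m" "ord c dvd n" using assms(1,2,3) pow_eq_id by blast+
  then have "ord c = 1" using assms(4) coprime_common_divisor_nat by auto
  then show ?thesis using ord_eq_1 assms(1) by simp
qed

lemma sq_pow: "c \<in> carrier G \<Longrightarrow> c [^] (2::nat) = c \<otimes> c"
  by (simp add: numeral_2_eq_2)

lemma odd_elem:
  assumes fin: "finite (carrier G)" and nt: "\<not> two_group G"
  shows "\<exists>g\<in>carrier G. g \<noteq> \<one> \<and> (\<exists>b::nat. odd b \<and> g [^] b = \<one>)"
proof -
  obtain x where x: "x \<in> carrier G" "\<forall>k::nat. ord x \<noteq> 2 ^ k" using nt unfolding two_group_def by blast
  have "ord x > 0" using ord_ge_1[OF fin x(1)] by simp
  then obtain a b where ab: "ord x = 2^a * b" "odd b" using two_odd_decomp[of "ord x"] by blast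
  have b1: "b \<noteq> 1"
  proof
    assume "b = 1" then have "ord x = 2^a" using ab by simp
    then show False using x(2) by blast
  qed
  let ?g = "x [^] ((2::nat)^a)"
  have gc: "?g \<in> carrier G" using x(1) by simp
  have "?g [^] b = x [^] ord x" using x(1) ab(1) by (simp add: nat_pow_pow)
  then have gb: "?g [^] b = \<one>" using x(1) by simp
  have "?g \<noteq> \<one>"
  proof
    assume "?g = \<one>"
    then have "ord x dvd 2^a" using pow_eq_id x(1) by blast
    then have "2^a * b dvd 2^a * 1" using ab by simp
    then have "b dvd 1" using nat_mult_dvd_cancel1[of "2^a" b 1] by simp
    then show False using b1 by simp
  qed
  then show ?thesis using gc gb ab(2) by (intro bexI[of _ ?g] conjI exI[of _ b]) auto
qed

end

context comm_group begin

lemma val_inj: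
  assumes h: "h \<in> carrier G" "h \<noteq> \<one>" "h \<otimes> h = \<one>"
    and g2: "g2 \<in> carrier G" "g2 \<noteq> \<one>" "g2 \<otimes> g2 \<noteq> \<one>" "g2 [^] (b::nat) = \<one>" "odd b"
    and a: "a \<in> {h, \<one>}" "a' \<in> {h, \<one>}" and ij: "i \<le> 2" "j \<le> 2" "i \<le> j"
    and eq: "a \<otimes> g2 [^] (i::nat) = a' \<otimes> g2 [^] (j::nat)"
  shows "a = a' \<and> i = j"
proof -
  have ac: "a \<in> carrier G" "a' \<in> carrier G" using a h by auto
  have "a \<otimes> g2 [^] i = (a' \<otimes> g2 [^] (j - i)) \<otimes> g2 [^] i"
    using eq ij g2 ac by (simp add: m_assoc nat_pow_mult)
  then have e: "a = a' \<otimes> g2 [^] (j - i)" using ac g2 by simp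
  have hpow: "h [^] b \<noteq> \<one>"
  proof
    assume "h [^] b = \<one>"
    moreover have "h [^] (2::nat) = \<one>" using h sq_pow by simp
    moreover have "coprime (2::nat) b" using g2(5) by simp
    ultimately show False using pow_coprime_one[of h 2 b] h by simp
  qed
  consider "j - i = 0" | "j - i = 1" | "j - i = 2" using ij by linarith
  then show ?thesis
  proof cases
    case 1 then show ?thesis using e ac ij by simp
  next
    case 2
    then have e': "a = a' \<otimes> g2" using e ac g2 by simp
    show ?thesis
    proof (cases "a = a'")
      case True
      then have "a' = a' \<otimes> g2" using e' by simp
      then have "g2 = \<one>" using l_cancel_one' ac g2 by blast
      then show ?thesis using g2 by simp
    next
      case False
      then have "(a = h \<and> a' = \<one>) \<or> (a = \<one> \<and> a' = h)" using a by auto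
      then show ?thesis
      proof
        assume "a = h \<and> a' = \<one>"
        then have "h = g2" using e' g2 by (elim conjE) simp
        then show ?thesis using g2 hpow by simp
      next
        assume "a = \<one> \<and> a' = h"
        then have "\<one> = h \<otimes> g2" using e' by (elim conjE) simp
        then have "h = inv g2" using h g2 by (metis inv_equality)
        then have "h [^] b = \<one>" using g2 by (simp add: nat_pow_inv)
        then show ?thesis using hpow by simp
      qed
    qed
  next
    case 3
    then have e': "a = a' \<otimes> (g2 \<otimes> g2)" using e ac g2 by (simp add: sq_pow)
    have gg: "(g2 \<otimes> g2) [^] b = \<one>" using g2 by (simp add: pow_mult_distrib m_comm)
    show ?thesis
    proof (cases "a = a'")
      case True
      then have "a' = a' \<otimes> (g2 \<otimes> g2)" using e' by simp
      then have "g2 \<otimes> g2 = \<one>" using l_cancel_one' ac g2 m_closed by blast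
      then show ?thesis using g2 by simp
    next
      case False
      then have "(a = h \<and> a' = \<one>) \<or> (a = \<one> \<and> a' = h)" using a by auto
      then show ?thesis
      proof
        assume "a = h \<and> a' = \<one>"
        then have "h = g2 \<otimes> g2" using e' g2 by (elim conjE) simp
        then show ?thesis using gg hpow by simp
      next
        assume "a = \<one> \<and> a' = h"
        then have "\<one> = h \<otimes> (g2 \<otimes> g2)" using e' by (elim conjE) simp
        then have "h = inv (g2 \<otimes> g2)" using h g2 by (metis inv_equality m_closed)
        then have "h [^] b = \<one>" using g2 gg by (simp add: nat_pow_inv)
        then show ?thesis using hpow by simp
      qed
    qed
  qed
qed


lemma sq_mult: "z \<in> carrier G \<Longrightarrow> w \<in> carrier G \<Longrightarrow> (z \<otimes> w) \<otimes> (z \<otimes> w) = (z \<otimes> z) \<otimes> (w \<otimes> w)"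
  by (simp add: m_ac)

lemma sq_pow_nat: "g \<in> carrier G \<Longrightarrow> (g [^] (i::nat)) \<otimes> (g [^] i) = (g \<otimes> g) [^] i"
  by (simp add: pow_mult_distrib m_comm)

lemma bad_count:
  assumes fin: "finite (carrier G)"
    and h: "h \<in> carrier G" "h \<noteq> \<one>" "h \<otimes> h = \<one>"
    and g: "g \<in> carrier G" "g \<noteq> \<one>" "odd b" "g [^] (b::nat) = \<one>"
  shows "6 * card {x \<in> carrier G. x \<otimes> x = h} \<le> order G"
proof (cases "{x \<in> carrier G. x \<otimes> x = h} = {}")
  case True
  have "card {x \<in> carrier G. x \<otimes> x = h} = 0" by (subst True) simp
  then show ?thesis by simp
next
  case False
  define B where "B = {x \<in> carrier G. x \<otimes> x = h}"
  obtain x0 where x0: "x0 \<in> carrier G" "x0 \<otimes> x0 = h" using False by blast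
  define g2 where "g2 = g \<otimes> g"
  have g2c: "g2 \<in> carrier G" using g g2_def by simp
  have cop: "coprime (2::nat) b" using g by simp
  have g2b: "g2 [^] b = \<one>" using g unfolding g2_def by (simp add: pow_mult_distrib m_comm)
  have g21: "g2 \<noteq> \<one>"
  proof
    assume "g2 = \<one>"
    then have "g [^] (2::nat) = \<one>" using g sq_pow g2_def by simp
    then show False using pow_coprime_one[OF g(1) _ g(4) cop] g by simp
  qed
  have g22: "g2 \<otimes> g2 \<noteq> \<one>"
  proof
    assume "g2 \<otimes> g2 = \<one>"
    then have "g2 [^] (2::nat) = \<one>" using g2c sq_pow by simp
    then show False using pow_coprime_one[OF g2c _ g2b cop] g21 by simp
  qed
  define val where "val = (\<lambda>(a, i::nat). a \<otimes> g2 [^] i)"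
  define I where "I = {h, \<one>} \<times> {0::nat, 1, 2}"
  define Z where "Z = (\<lambda>v. {z \<in> carrier G. z \<otimes> z = v})"
  have inj: "inj_on val I"
  proof (rule inj_onI)
    fix q q' assume q: "q \<in> I" "q' \<in> I" and e: "val q = val q'"
    obtain a i where qa: "q = (a, i)" by force
    obtain a' j where qa': "q' = (a', j)" by force
    have ai: "a \<in> {h, \<one>}" "i \<le> 2" "a' \<in> {h, \<one>}" "j \<le> 2" using q qa qa' I_def by auto
    have e': "a \<otimes> g2 [^] i = a' \<otimes> g2 [^] j" using e qa qa' val_def by simp
    show "q = q'"
    proof (cases "i \<le> j")
      case True
      then show ?thesis using val_inj[OF h g2c g21 g22 g2b g(3) ai(1) ai(3) ai(2) ai(4) True e'] qa qa' by simp
    next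
      case False
      then show ?thesis using val_inj[OF h g2c g21 g22 g2b g(3) ai(3) ai(1) ai(4) ai(2) _ e'[symmetric]] qa qa' by simp
    qed
  qed
  have cI: "card I = 6" using h(2) unfolding I_def by (simp add: card_cartesian_product)
  have fI: "finite I" unfolding I_def by simp
  have finB: "finite B" using fin B_def by simp
  have ge: "card B \<le> card (Z (val q))" if q: "q \<in> I" for q
  proof -
    obtain a i where qa: "q = (a, i)" "a \<in> {h, \<one>}" using q unfolding I_def by (cases q) auto
    have fZ: "finite (Z (val q))" using fin Z_def by simp
    show ?thesis
    proof (cases "a = h")
      case True
      have "inj_on (\<lambda>z. z \<otimes> g [^] i) B"
      proof (rule inj_onI)
        fix z z' assume "z \<in> B" "z' \<in> B" "z \<otimes> g [^] i = z' \<otimes> g [^] i"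
        then show "z = z'" using g(1) unfolding B_def by simp
      qed
      moreover have "(\<lambda>z. z \<otimes> g [^] i) ` B \<subseteq> Z (val q)"
      proof
        fix y assume "y \<in> (\<lambda>z. z \<otimes> g [^] i) ` B"
        then obtain z where z: "z \<in> carrier G" "z \<otimes> z = h" "y = z \<otimes> g [^] i" using B_def by auto
        have "y \<otimes> y = h \<otimes> g2 [^] i" using z g sq_mult[of z "g [^] i"] sq_pow_nat[of g i] g2_def by simp
        then show "y \<in> Z (val q)" using z g qa True Z_def val_def by simp
      qed
      ultimately show ?thesis using fZ card_inj_on_le by blast
    next
      case False
      then have a1: "a = \<one>" using qa by simp
      have "inj_on (\<lambda>z. z \<otimes> (x0 \<otimes> g [^] i)) B"
      proof (rule inj_onI)
        fix z z' assume "z \<in> B" "z' \<in> B" "z \<otimes> (x0 \<otimes> g [^] i) = z' \<otimes> (x0 \<otimes> g [^] i)"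
        then show "z = z'" using g(1) x0(1) unfolding B_def by simp
      qed
      moreover have "(\<lambda>z. z \<otimes> (x0 \<otimes> g [^] i)) ` B \<subseteq> Z (val q)"
      proof
        fix y assume "y \<in> (\<lambda>z. z \<otimes> (x0 \<otimes> g [^] i)) ` B"
        then obtain z where z: "z \<in> carrier G" "z \<otimes> z = h" "y = z \<otimes> (x0 \<otimes> g [^] i)" using B_def by auto
        have "y \<otimes> y = (z \<otimes> z) \<otimes> ((x0 \<otimes> x0) \<otimes> (g [^] i \<otimes> g [^] i))"
          using z x0 g sq_mult[of z "x0 \<otimes> g [^] i"] sq_mult[of x0 "g [^] i"] by simp
        also have "\<dots> = h \<otimes> (h \<otimes> g2 [^] i)"
          unfolding z(2) x0(2) sq_pow_nat[OF g(1)] g2_def ..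
        also have "\<dots> = (h \<otimes> h) \<otimes> g2 [^] i" by (rule m_assoc[symmetric]) (use h g2c in simp_all)
        also have "\<dots> = g2 [^] i" using h g2c by simp
        finally show "y \<in> Z (val q)" using z x0 g g2c qa a1 Z_def val_def by simp
      qed
      ultimately show ?thesis using fZ card_inj_on_le by blast
    qed
  qed
  have disj: "Z (val q) \<inter> Z (val q') = {}" if "q \<in> I" "q' \<in> I" "q \<noteq> q'" for q q'
  proof -
    have "val q \<noteq> val q'" using inj that inj_onD by metis
    then show ?thesis unfolding Z_def by auto
  qed
  have "6 * card B = (\<Sum>q\<in>I. card B)" using cI by simp
  also have "\<dots> \<le> (\<Sum>q\<in>I. card (Z (val q)))" using ge by (rule sum_mono)
  also have "\<dots> = card (\<Union>q\<in>I. Z (val q))"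
    using fI fin disj by (subst card_UN_disjoint) (auto simp: Z_def)
  also have "\<dots> \<le> card (carrier G)" using fin by (intro card_mono) (auto simp: Z_def)
  finally show ?thesis unfolding B_def order_def .
qed

end


context comm_group begin

definition orb :: "'a \<Rightarrow> 'a set" where "orb x = {x, inv x}"

lemma orb_in: "x \<in> carrier G \<Longrightarrow> x \<noteq> \<one> \<Longrightarrow> orb x \<in> inv_orbits G"
  unfolding orb_def inv_orbits_def by blast

lemma orb_inv: "x \<in> carrier G \<Longrightarrow> orb (inv x) = orb x"
  unfolding orb_def by auto

lemma orb_eq: "orb a = orb b \<Longrightarrow> b = a \<or> b = inv a"
  unfolding orb_def by (metis doubleton_eq_iff)

lemma inv_orbits_sub: "ob \<in> inv_orbits G \<Longrightarrow> ob \<subseteq> carrier G - {\<one>}"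
  unfolding inv_orbits_def by auto

lemma inv_orbits_orb: "ob \<in> inv_orbits G \<Longrightarrow> \<exists>x\<in>carrier G. x \<noteq> \<one> \<and> ob = orb x"
  unfolding inv_orbits_def orb_def by auto

lemma mem_Union_orb:
  assumes T: "T \<subseteq> inv_orbits G" and x: "x \<in> carrier G" "x \<noteq> \<one>"
  shows "x \<in> \<Union>T \<longleftrightarrow> orb x \<in> T"
proof
  assume "x \<in> \<Union>T"
  then obtain ob where ob: "ob \<in> T" "x \<in> ob" by blast
  then obtain y where y: "y \<in> carrier G" "ob = orb y" using T inv_orbits_orb by blast
  have "x = y \<or> x = inv y" using ob y unfolding orb_def by auto
  then have "orb x = ob" using y orb_inv by auto
  then show "orb x \<in> T" using ob by simp
next
  assume "orb x \<in> T" then show "x \<in> \<Union>T" unfolding orb_def by blast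
qed

lemma finite_inv_orbits: "finite (carrier G) \<Longrightarrow> finite (inv_orbits G)"
  unfolding inv_orbits_def by simp

lemma rcos_inv:
  assumes H: "subgroup H G" and a: "a \<in> carrier G"
  shows "H #> inv a = (\<lambda>z. inv z) ` (H #> a)"
proof
  show "H #> inv a \<subseteq> (\<lambda>z. inv z) ` (H #> a)"
  proof
    fix z assume "z \<in> H #> inv a"
    then obtain k where k: "k \<in> H" "z = k \<otimes> inv a" unfolding r_coset_def by blast
    have kc: "k \<in> carrier G" using subgroup.mem_carrier[OF H k(1)] .
    have "inv k \<otimes> a \<in> H #> a" using subgroup.m_inv_closed[OF H k(1)] a H subgroup.subset rcosI by blast
    moreover have "z = inv (inv k \<otimes> a)" using k kc a by (simp add: inv_mult)
    ultimately show "z \<in> (\<lambda>z. inv z) ` (H #> a)" by blast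
  qed
next
  show "(\<lambda>z. inv z) ` (H #> a) \<subseteq> H #> inv a"
  proof
    fix z assume "z \<in> (\<lambda>z. inv z) ` (H #> a)"
    then obtain k where k: "k \<in> H" "z = inv (k \<otimes> a)" unfolding r_coset_def by blast
    have kc: "k \<in> carrier G" using subgroup.mem_carrier[OF H k(1)] .
    have "inv k \<otimes> inv a \<in> H #> inv a" using subgroup.m_inv_closed[OF H k(1)] a H subgroup.subset rcosI by blast
    moreover have "z = inv k \<otimes> inv a" using k kc a by (simp add: inv_mult)
    ultimately show "z \<in> H #> inv a" by simp
  qed
qed

lemma orb_rcos_inv:
  assumes H: "subgroup H G" and a: "a \<in> carrier G"
  shows "orb ` (H #> inv a) = orb ` (H #> a)"
proof -
  have sub: "H #> a \<subseteq> carrier G" using r_coset_subset_G H subgroup.subset a by blast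
  have "orb ` (H #> inv a) = (\<lambda>z. orb (inv z)) ` (H #> a)" using rcos_inv[OF H a] by (simp add: image_comp)
  also have "\<dots> = orb ` (H #> a)" using sub orb_inv by (intro image_cong) auto
  finally show ?thesis .
qed

end


context comm_group begin

lemma Good_or_bad:
  assumes finG: "finite (carrier G)" and H: "subgroup H G" and hH: "h \<in> H" "h \<noteq> \<one>" and x: "x \<in> carrier G"
    and lt: "card (orb ` (H #> x)) < 2"
  shows "h \<otimes> h = \<one> \<and> x \<otimes> x = h"
proof -
  have hc: "h \<in> carrier G" using subgroup.mem_carrier[OF H hH(1)] .
  have Hsub: "H \<subseteq> carrier G" using H subgroup.subset by blast
  have "H #> x \<subseteq> carrier G" using r_coset_subset_G[OF Hsub x] .
  then have fin: "finite (orb ` (H #> x))" using finG finite_subset by blast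
  have le1: "card (orb ` (H #> x)) \<le> 1" using lt by simp
  have x1: "x \<in> H #> x" using rcos_self[OF x H] .
  have x2: "h \<otimes> x \<in> H #> x" using rcosI[OF hH(1) Hsub x] .
  have hh: "h \<otimes> h \<in> H" using subgroup.m_closed[OF H hH(1) hH(1)] .
  have x3: "(h \<otimes> h) \<otimes> x \<in> H #> x" using rcosI[OF hh Hsub x] .
  have eq: "orb y = orb x" if "y \<in> H #> x" for y
  proof -
    have "card (orb ` (H #> x)) \<le> Suc 0" using le1 by simp
    then have all: "\<forall>a1\<in>orb ` (H #> x). \<forall>a2\<in>orb ` (H #> x). a1 = a2"
      using card_le_Suc0_iff_eq[OF fin] by (rule iffD1[rotated])
    have yi: "orb y \<in> orb ` (H #> x)" using that by (rule imageI)
    have xi: "orb x \<in> orb ` (H #> x)" using x1 by (rule imageI)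
    show ?thesis using bspec[OF bspec[OF all yi] xi] .
  qed
  have "h \<otimes> x = x \<or> h \<otimes> x = inv x" using orb_eq[OF eq[OF x2, symmetric]] .
  moreover have "h \<otimes> x \<noteq> x" using hc x hH(2) by simp
  ultimately have e1: "h \<otimes> x = inv x" by blast
  have "(h \<otimes> h) \<otimes> x = x \<or> (h \<otimes> h) \<otimes> x = inv x" using orb_eq[OF eq[OF x3, symmetric]] .
  moreover have "(h \<otimes> h) \<otimes> x \<noteq> inv x"
  proof
    assume "(h \<otimes> h) \<otimes> x = inv x"
    then have "h \<otimes> (h \<otimes> x) = \<one> \<otimes> (h \<otimes> x)" using e1 hc x by (simp add: m_assoc)
    then have "h = \<one>" using hc x by (metis m_closed one_closed right_cancel)
    then show False using hH(2) by simp
  qed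
  ultimately have e2: "(h \<otimes> h) \<otimes> x = x" by blast
  have hh1: "h \<otimes> h = \<one>" using e2 hc x by simp
  have "(h \<otimes> x) \<otimes> x = \<one>" using e1 x by simp
  then have "h \<otimes> (x \<otimes> x) = h \<otimes> h" using hh1 hc x by (simp add: m_assoc)
  then have "x \<otimes> x = h" using hc x by simp
  then show ?thesis using hh1 by simp
qed

end


lemma rand_prob_wt: "rand_prob G p E = (\<Sum>T\<in>{T. T \<subseteq> inv_orbits G \<and> E (\<Union>T)}. wt (inv_orbits G) p T)"
  unfolding rand_prob_def wt_def by simp

lemma exp_bound:
  fixes p :: real
  assumes "0 \<le> p" "p \<le> 1/2" "real n \<le> 12 * real e"
  shows "(1 - p) ^ e \<le> exp (- p * real n / 12)"
proof -
  have "(1 - p) ^ e \<le> exp (- p) ^ e"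
    using assms exp_ge_add_one_self[of "-p"] by (intro power_mono) auto
  also have "\<dots> = exp (real e * (- p))" by (rule exp_of_nat_mult[symmetric])
  also have "\<dots> \<le> exp (- p * real n / 12)"
  proof -
    have "p * real n \<le> p * (12 * real e)" using assms by (intro mult_left_mono) auto
    then show ?thesis by (simp add: algebra_simps)
  qed
  finally show ?thesis .
qed

context comm_group begin

lemma coset_out:
  assumes H: "subgroup H G" and HK: "H \<subseteq> K" and K: "subgroup K G" and x: "x \<in> carrier G" "x \<notin> K"
  shows "H #> x \<subseteq> carrier G - K"
proof
  fix z assume "z \<in> H #> x"
  then obtain k where k: "k \<in> H" "z = k \<otimes> x" unfolding r_coset_def by blast
  have kK: "k \<in> K" using k(1) HK by blast
  have kc: "k \<in> carrier G" using subgroup.mem_carrier[OF K kK] .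
  have zc: "z \<in> carrier G" using k(2) kc x(1) by simp
  show "z \<in> carrier G - K"
  proof (rule DiffI[OF zc], rule notI)
    assume "z \<in> K"
    then have "inv k \<otimes> z \<in> K" using subgroup.m_closed[OF K subgroup.m_inv_closed[OF K kK]] by blast
    moreover have "inv k \<otimes> z = x" using k(2) kc x(1) by (simp add: m_assoc[symmetric])
    ultimately show False using x(2) by simp
  qed
qed


lemma per_event:
  assumes finG: "finite (carrier G)" and nt: "\<not> two_group G"
    and K: "subgroup K G" "K \<noteq> carrier G" and hK: "h \<in> K" "h \<noteq> \<one>"
    and p: "0 \<le> p" "p \<le> 1/2"
  shows "rand_prob G p (\<lambda>S. \<forall>y\<in>S - K. generate G {h} #> y \<subseteq> S) \<le> exp (- p * real (order G) / 12)"
proof -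
  define H where "H = generate G {h}"
  have hc: "h \<in> carrier G" using subgroup.mem_carrier[OF K(1) hK(1)] .
  have Hsg: "subgroup H G" unfolding H_def using generate_is_subgroup hc by simp
  have hH: "h \<in> H" unfolding H_def by (rule generate.incl) simp
  have HK: "H \<subseteq> K" unfolding H_def using generate_subgroup_incl[OF _ K(1)] hK(1) by simp
  have Hsub: "H \<subseteq> carrier G" using Hsg subgroup.subset by blast
  have oneK: "\<one> \<in> K" using subgroup.one_closed[OF K(1)] .
  define Om where "Om = inv_orbits G"
  define Good where "Good = {x \<in> carrier G - K. 2 \<le> card (orb ` (H #> x))}"
  define BB where "BB = (\<lambda>x. orb ` (H #> x)) ` Good"
  have finO: "finite Om" unfolding Om_def using finite_inv_orbits[OF finG] .
  have cout: "H #> x \<subseteq> carrier G - {\<one>}" if "x \<in> carrier G" "x \<notin> K" for x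
    using coset_out[OF Hsg HK K(1) that] oneK by blast
  have finGood: "finite Good" unfolding Good_def using finG by simp
  have finBB: "finite BB" unfolding BB_def using finGood by simp
  have BBsub: "B \<subseteq> Om \<and> 2 \<le> card B" if BB: "B \<in> BB" for B
  proof -
    obtain x where x: "x \<in> Good" "B = orb ` (H #> x)" using BB unfolding BB_def by blast
    have xc: "x \<in> carrier G" "x \<notin> K" using x(1) unfolding Good_def by auto
    have "B \<subseteq> Om"
    proof
      fix ob assume "ob \<in> B"
      then obtain z where z: "z \<in> H #> x" "ob = orb z" using x(2) by blast
      have "z \<in> carrier G - {\<one>}" using cout[OF xc] z(1) by blast
      then show "ob \<in> Om" unfolding Om_def z(2) using orb_in by blast
    qed
    moreover have "2 \<le> card B" using x unfolding Good_def by simp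
    ultimately show ?thesis by simp
  qed
  have disj: "pairwise disjnt BB"
  proof (rule pairwiseI)
    fix B1 B2 assume B1: "B1 \<in> BB" and B2: "B2 \<in> BB" and ne: "B1 \<noteq> B2"
    obtain x where x: "x \<in> Good" "B1 = orb ` (H #> x)" using B1 unfolding BB_def by blast
    obtain y where y: "y \<in> Good" "B2 = orb ` (H #> y)" using B2 unfolding BB_def by blast
    have xc: "x \<in> carrier G" using x(1) unfolding Good_def by auto
    have yc: "y \<in> carrier G" using y(1) unfolding Good_def by auto
    show "disjnt B1 B2"
    proof (rule ccontr)
      assume "\<not> disjnt B1 B2"
      then obtain ob where ob: "ob \<in> B1" "ob \<in> B2" unfolding disjnt_def by blast
      obtain a where a: "a \<in> H #> x" "ob = orb a" using ob(1) x(2) by blast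
      obtain b where b: "b \<in> H #> y" "ob = orb b" using ob(2) y(2) by blast
      have ac: "a \<in> carrier G" using a(1) r_coset_subset_G[OF Hsub xc] by blast
      have Hx: "H #> x = H #> a" using repr_independence[OF a(1) xc Hsg] .
      have Hy: "H #> y = H #> b" using repr_independence[OF b(1) yc Hsg] .
      have "b = a \<or> b = inv a" using orb_eq a(2) b(2) by simp
      then have "B1 = B2"
      proof
        assume "b = a" then show "B1 = B2" using x(2) y(2) Hx Hy by simp
      next
        assume "b = inv a"
        then have "B2 = orb ` (H #> inv a)" using y(2) Hy by simp
        also have "\<dots> = orb ` (H #> a)" using orb_rcos_inv[OF Hsg ac] .
        finally show "B1 = B2" using x(2) Hx by simp
      qed
      then show False using ne by simp
    qed
  qed
  have event: "\<forall>B\<in>BB. B \<subseteq> T \<or> B \<inter> T = {}"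
    if T: "T \<subseteq> Om" and E: "\<forall>y\<in>\<Union>T - K. generate G {h} #> y \<subseteq> \<Union>T" for T
  proof
    fix B assume "B \<in> BB"
    then obtain x where x: "x \<in> Good" "B = orb ` (H #> x)" unfolding BB_def by blast
    have xc: "x \<in> carrier G" "x \<notin> K" using x(1) unfolding Good_def by auto
    have TO: "T \<subseteq> inv_orbits G" using T unfolding Om_def .
    have memC: "z \<in> \<Union>T \<longleftrightarrow> orb z \<in> T" if "z \<in> H #> x" for z
    proof -
      have "z \<in> carrier G - {\<one>}" using cout[OF xc] that by blast
      then show ?thesis using mem_Union_orb[OF TO] by blast
    qed
    show "B \<subseteq> T \<or> B \<inter> T = {}"
    proof (cases "\<exists>y\<in>H #> x. y \<in> \<Union>T")
      case True
      then obtain y where y: "y \<in> H #> x" "y \<in> \<Union>T" by blast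
      have yK: "y \<notin> K" using coset_out[OF Hsg HK K(1) xc] y(1) by blast
      have "H #> y \<subseteq> \<Union>T" using E y(2) yK unfolding H_def by blast
      moreover have "H #> x = H #> y" using repr_independence[OF y(1) xc(1) Hsg] .
      ultimately have "H #> x \<subseteq> \<Union>T" by simp
      then have "B \<subseteq> T" using memC x(2) by blast
      then show ?thesis by simp
    next
      case False
      then have "B \<inter> T = {}" using memC x(2) by blast
      then show ?thesis by simp
    qed
  qed
  define e where "e = (\<Sum>B\<in>BB. card B - 1)"
  have step1: "rand_prob G p (\<lambda>S. \<forall>y\<in>S - K. generate G {h} #> y \<subseteq> S)
      \<le> (\<Sum>T\<in>{T. T \<subseteq> Om \<and> (\<forall>B\<in>BB. B \<subseteq> T \<or> B \<inter> T = {})}. wt Om p T)"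
    unfolding rand_prob_wt Om_def[symmetric]
  proof (rule sum_mono2)
    show "finite {T. T \<subseteq> Om \<and> (\<forall>B\<in>BB. B \<subseteq> T \<or> B \<inter> T = {})}" using finO by simp
    show "{T. T \<subseteq> Om \<and> (\<forall>y\<in>\<Union>T - K. generate G {h} #> y \<subseteq> \<Union>T)}
        \<subseteq> {T. T \<subseteq> Om \<and> (\<forall>B\<in>BB. B \<subseteq> T \<or> B \<inter> T = {})}"
      using event by blast
    show "\<And>b. b \<in> {T. T \<subseteq> Om \<and> (\<forall>B\<in>BB. B \<subseteq> T \<or> B \<inter> T = {})} -
          {T. T \<subseteq> Om \<and> (\<forall>y\<in>\<Union>T - K. generate G {h} #> y \<subseteq> \<Union>T)} \<Longrightarrow> 0 \<le> wt Om p b"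
      using p by (intro wt_nonneg) auto
  qed
  have step2: "(\<Sum>T\<in>{T. T \<subseteq> Om \<and> (\<forall>B\<in>BB. B \<subseteq> T \<or> B \<inter> T = {})}. wt Om p T) \<le> (1 - p) ^ e"
    unfolding e_def using block_bound[OF finBB finO _ disj p] BBsub by blast
  have count: "real (order G) \<le> 12 * real e"
  proof -
    define Bad where "Bad = {x \<in> carrier G. x \<otimes> x = h \<and> h \<otimes> h = \<one>}"
    have finK: "finite K" using finG K(1) subgroup.subset finite_subset by blast
    have finBad: "finite Bad" unfolding Bad_def using finG by simp
    have cK: "2 * card K \<le> order G" using card_proper_subgroup[OF finG K] .
    have cCK: "card (carrier G - K) = order G - card K"
      unfolding order_def using card_Diff_subset[OF finK subgroup.subset[OF K(1)]] .
    have cBad: "6 * card Bad \<le> order G"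
    proof (cases "h \<otimes> h = \<one>")
      case True
      then have "Bad = {x \<in> carrier G. x \<otimes> x = h}" unfolding Bad_def by simp
      moreover obtain g b where g: "g \<in> carrier G" "g \<noteq> \<one>" "odd b" "g [^] (b::nat) = \<one>"
        using odd_elem[OF finG nt] by blast
      ultimately show ?thesis using bad_count[OF finG hc hK(2) True g] by simp
    next
      case False
      then have "Bad = {}" unfolding Bad_def by simp
      then show ?thesis by simp
    qed
    have subG: "(carrier G - K) - Bad \<subseteq> Good"
    proof
      fix x assume x: "x \<in> (carrier G - K) - Bad"
      have xc: "x \<in> carrier G" using x by blast
      show "x \<in> Good"
      proof (rule ccontr)
        assume "x \<notin> Good"
        then have "card (orb ` (H #> x)) < 2" using x unfolding Good_def by auto
        then have "h \<otimes> h = \<one> \<and> x \<otimes> x = h" using Good_or_bad[OF finG Hsg hH hK(2) xc] by blast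
        then have "x \<in> Bad" unfolding Bad_def using xc by blast
        then show False using x by blast
      qed
    qed
    have c1: "card (carrier G - K) \<le> card Good + card Bad"
    proof -
      have "card (carrier G - K) - card Bad \<le> card ((carrier G - K) - Bad)"
        using diff_card_le_card_Diff[OF finBad] .
      also have "\<dots> \<le> card Good" using card_mono[OF finGood subG] .
      finally show ?thesis by linarith
    qed
    have finUBB: "finite (\<Union>BB)" using finite_subset[OF _ finO] BBsub by blast
    have c2: "card Good \<le> 2 * card (orb ` Good)"
    proof -
      have "Good \<subseteq> \<Union>(orb ` Good)" unfolding orb_def by blast
      then have "card Good \<le> card (\<Union>(orb ` Good))"
        using card_mono finGood by (metis finite_UN_I finite_imageI finite.emptyI finite.insertI orb_def)
      also have "\<dots> \<le> (\<Sum>ob\<in>orb ` Good. card ob)" by (rule card_Union_le_sum_card)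
      also have "\<dots> \<le> (\<Sum>ob\<in>orb ` Good. 2)"
      proof (rule sum_mono)
        fix ob assume "ob \<in> orb ` Good"
        then obtain x where "ob = orb x" by blast
        then show "card ob \<le> 2" unfolding orb_def by (simp add: card_insert_le_m1)
      qed
      also have "\<dots> = 2 * card (orb ` Good)" by simp
      finally show ?thesis .
    qed
    have c3: "card (orb ` Good) \<le> card (\<Union>BB)"
    proof (rule card_mono[OF finUBB])
      show "orb ` Good \<subseteq> \<Union>BB"
      proof
        fix ob assume "ob \<in> orb ` Good"
        then obtain x where x: "x \<in> Good" "ob = orb x" by blast
        have xc: "x \<in> carrier G" using x(1) unfolding Good_def by blast
        have "x \<in> H #> x" using rcos_self[OF xc Hsg] .
        then have "ob \<in> orb ` (H #> x)" using x(2) by blast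
        moreover have "orb ` (H #> x) \<in> BB" unfolding BB_def using x(1) by blast
        ultimately show "ob \<in> \<Union>BB" by blast
      qed
    qed
    have c4: "card (\<Union>BB) = (\<Sum>B\<in>BB. card B)"
    proof (rule card_Union_disjoint[OF disj])
      fix B assume "B \<in> BB"
      then show "finite B" using BBsub finite_subset finO by blast
    qed
    have c5: "(\<Sum>B\<in>BB. card B) \<le> 2 * e"
    proof -
      have "(\<Sum>B\<in>BB. card B) \<le> (\<Sum>B\<in>BB. 2 * (card B - 1))"
        using BBsub by (intro sum_mono) force
      also have "\<dots> = 2 * e" unfolding e_def by (simp add: sum_distrib_left)
      finally show ?thesis .
    qed
    have "order G \<le> 12 * e" using cK cCK cBad c1 c2 c3 c4 c5 by linarith
    then show ?thesis by (simp add: of_nat_mult[symmetric] del: of_nat_mult)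
  qed
  show ?thesis using step1 step2 exp_bound[OF p count] by linarith
qed

end


lemma sum_UN_le:
  fixes f :: "'x \<Rightarrow> real"
  assumes "finite I" "\<And>i. i \<in> I \<Longrightarrow> finite (A i)" "\<And>x. 0 \<le> f x"
  shows "sum f (\<Union>i\<in>I. A i) \<le> (\<Sum>i\<in>I. sum f (A i))"
  using assms
proof (induction I rule: finite_induct)
  case empty then show ?case by simp
next
  case (insert j I)
  have fU: "finite (\<Union>i\<in>I. A i)" using insert by auto
  have fj: "finite (A j)" using insert by auto
  have "sum f (\<Union>i\<in>insert j I. A i) = sum f (A j \<union> (\<Union>i\<in>I. A i))" by simp
  also have "\<dots> = sum f (A j) + sum f (\<Union>i\<in>I. A i) - sum f (A j \<inter> (\<Union>i\<in>I. A i))"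
    using sum_Un[OF fj fU] .
  also have "\<dots> \<le> sum f (A j) + sum f (\<Union>i\<in>I. A i)"
    using insert(5) by (simp add: sum_nonneg)
  also have "\<dots> \<le> sum f (A j) + (\<Sum>i\<in>I. sum f (A i))" using insert by simp
  also have "\<dots> = (\<Sum>i\<in>insert j I. sum f (A i))" using insert by simp
  finally show ?case .
qed

lemma rand_prob_union:
  assumes fin: "finite (inv_orbits G)" and I: "finite I" and p: "0 \<le> p" "p \<le> 1"
    and cov: "\<And>S. E S \<Longrightarrow> \<exists>i\<in>I. F i S"
  shows "rand_prob G p E \<le> (\<Sum>i\<in>I. rand_prob G p (F i))"
proof -
  let ?O = "inv_orbits G"
  let ?A = "\<lambda>i. {T. T \<subseteq> ?O \<and> F i (\<Union>T)}"
  have "rand_prob G p E = sum (wt ?O p) {T. T \<subseteq> ?O \<and> E (\<Union>T)}" by (rule rand_prob_wt)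
  also have "\<dots> \<le> sum (wt ?O p) (\<Union>i\<in>I. ?A i)"
  proof (rule sum_mono2)
    show "finite (\<Union>i\<in>I. ?A i)" using fin I by simp
    show "{T. T \<subseteq> ?O \<and> E (\<Union>T)} \<subseteq> (\<Union>i\<in>I. ?A i)" using cov by blast
    show "\<And>b. b \<in> (\<Union>i\<in>I. ?A i) - {T. T \<subseteq> ?O \<and> E (\<Union>T)} \<Longrightarrow> 0 \<le> wt ?O p b"
      using p by (intro wt_nonneg) auto
  qed
  also have "\<dots> \<le> (\<Sum>i\<in>I. sum (wt ?O p) (?A i))"
    by (rule sum_UN_le) (use fin I p wt_nonneg in auto)
  also have "\<dots> = (\<Sum>i\<in>I. rand_prob G p (F i))" by (simp add: rand_prob_wt)
  finally show ?thesis .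
qed

lemma rand_prob_False: "rand_prob G p (\<lambda>S. False) = 0"
  unfolding rand_prob_def by simp

context group begin

lemma generate_insert_one:
  assumes "A \<subseteq> carrier G"
  shows "generate G (insert \<one> A) = generate G A"
proof
  show "generate G A \<subseteq> generate G (insert \<one> A)" by (rule mono_generate) auto
  have sg: "subgroup (generate G A) G" using generate_is_subgroup[OF assms] .
  have "insert \<one> A \<subseteq> generate G A"
  proof
    fix x assume "x \<in> insert \<one> A"
    then show "x \<in> generate G A"
    proof
      assume "x = \<one>" then show ?thesis using generate.one by simp
    next
      assume "x \<in> A" then show ?thesis by (rule generate.incl)
    qed
  qed
  then show "generate G (insert \<one> A) \<subseteq> generate G A" using generate_subgroup_incl[OF _ sg] by blast
qed

end



context comm_group begin

lemma covering:
  assumes finG: "finite (carrier G)" and bad: "bad_event G S"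
    and m: "m = nat \<lfloor>log 2 (real (order G))\<rfloor>"
  shows "\<exists>i\<in>carrier G \<times> {xs. set xs \<subseteq> carrier G \<and> length xs = m}.
     (\<lambda>(h, xs) S. h \<noteq> \<one> \<and> generate G (set xs) \<noteq> carrier G \<and> h \<in> generate G (set xs) \<and>
        (\<forall>y\<in>S - generate G (set xs). generate G {h} #> y \<subseteq> S)) i S"
proof -
  obtain H' K where H': "subgroup H' G" and K: "subgroup K G" and ne: "H' \<noteq> {\<one>}" and HK: "H' \<subseteq> K"
    and Kne: "K \<noteq> carrier G" and Cex: "\<exists>C \<subseteq> rcosets H'. S - K = \<Union>C"
    using bad unfolding bad_event_def by blast
  obtain C where C: "C \<subseteq> rcosets H'" "S - K = \<Union>C" using Cex by blast
  have "\<exists>h\<in>H'. h \<noteq> \<one>" using ne subgroup.one_closed[OF H'] by blast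
  then obtain h where h: "h \<in> H'" "h \<noteq> \<one>" by blast
  have hc: "h \<in> carrier G" using subgroup.mem_carrier[OF H' h(1)] .
  have hK: "h \<in> K" using h(1) HK by blast
  obtain xs0 where xs0: "set xs0 \<subseteq> K" "2 ^ length xs0 \<le> card K" "generate G (set xs0) = K"
    using generators_exist[OF finG K] by blast
  have Kc: "K \<subseteq> carrier G" using subgroup.subset[OF K] .
  have cKn: "card K \<le> order G" unfolding order_def using card_mono[OF finG Kc] .
  have npos: "order G > 0" using finG order_gt_0_iff_finite by blast
  have len: "length xs0 \<le> m"
  proof -
    have "(2::nat) ^ length xs0 \<le> order G" using xs0(2) cKn by linarith
    then have "(2::real) ^ length xs0 \<le> real (order G)" by (metis of_nat_le_iff of_nat_numeral of_nat_power)
    then have "2 powr real (length xs0) \<le> real (order G)" by (simp add: powr_realpow)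
    then have "real (length xs0) \<le> log 2 (real (order G))" using npos by (subst le_log_iff) auto
    then have "int (length xs0) \<le> \<lfloor>log 2 (real (order G))\<rfloor>" by (simp add: le_floor_iff)
    then show ?thesis using m by linarith
  qed
  define xs where "xs = xs0 @ replicate (m - length xs0) \<one>"
  have lxs: "length xs = m" unfolding xs_def using len by simp
  have sxs: "set xs \<subseteq> carrier G" unfolding xs_def using xs0(1) Kc by auto
  have gxs: "generate G (set xs) = K"
  proof (cases "m - length xs0 = 0")
    case True then show ?thesis unfolding xs_def using xs0(3) by simp
  next
    case False
    then have "set xs = insert \<one> (set xs0)" unfolding xs_def by auto
    then show ?thesis using generate_insert_one[of "set xs0"] xs0 Kc by auto
  qed
  have ev: "\<forall>y\<in>S - K. generate G {h} #> y \<subseteq> S"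
  proof
    fix y assume y: "y \<in> S - K"
    then obtain c where c: "c \<in> C" "y \<in> c" using C(2) by blast
    obtain a where a: "a \<in> carrier G" "c = H' #> a" using C(1) c(1) unfolding RCOSETS_def by blast
    have yc: "y \<in> H' #> a" using c(2) a(2) by simp
    have "H' #> a = H' #> y" using repr_independence[OF yc a(1) H'] .
    then have cy: "c = H' #> y" using a(2) by simp
    have gH: "generate G {h} \<subseteq> H'" using generate_subgroup_incl[OF _ H'] h(1) by simp
    have "generate G {h} #> y \<subseteq> H' #> y" using gH unfolding r_coset_def by blast
    also have "\<dots> = c" using cy by simp
    also have "\<dots> \<subseteq> S - K" using C(2) c(1) by blast
    finally show "generate G {h} #> y \<subseteq> S" by blast
  qed
  show ?thesis
    by (rule bexI[of _ "(h, xs)"]) (use hc sxs lxs gxs h(2) Kne hK ev in auto)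
qed

lemma main_bound:
  assumes finG: "finite (carrier G)" and nt: "\<not> two_group G"
    and p: "0 \<le> p" "p \<le> 1/2" and m: "m = nat \<lfloor>log 2 (real (order G))\<rfloor>"
  shows "rand_prob G p (bad_event G) \<le> real (order G) ^ (m + 1) * exp (- p * real (order G) / 12)"
proof -
  define I where "I = carrier G \<times> {xs. set xs \<subseteq> carrier G \<and> length xs = m}"
  define F where "F = (\<lambda>(h, xs) S. h \<noteq> \<one> \<and> generate G (set xs) \<noteq> carrier G \<and> h \<in> generate G (set xs) \<and>
        (\<forall>y\<in>S - generate G (set xs). generate G {h} #> y \<subseteq> S))"
  have finI: "finite I" unfolding I_def using finG by (simp add: finite_lists_length_eq)
  have cI: "card I = order G ^ (m + 1)"
    unfolding I_def order_def using finG by (simp add: card_cartesian_product card_lists_length_eq)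
  have "rand_prob G p (bad_event G) \<le> (\<Sum>i\<in>I. rand_prob G p (F i))"
  proof (rule rand_prob_union[OF finite_inv_orbits[OF finG] finI])
    show "0 \<le> p" "p \<le> 1" using p by auto
    fix S assume "bad_event G S"
    then show "\<exists>i\<in>I. F i S" using covering[OF finG _ m] unfolding I_def F_def by blast
  qed
  also have "\<dots> \<le> (\<Sum>i\<in>I. exp (- p * real (order G) / 12))"
  proof (rule sum_mono)
    fix i assume i: "i \<in> I"
    obtain h xs where hxs: "i = (h, xs)" by force
    have sxs: "set xs \<subseteq> carrier G" and hc: "h \<in> carrier G" using i hxs unfolding I_def by auto
    let ?K = "generate G (set xs)"
    show "rand_prob G p (F i) \<le> exp (- p * real (order G) / 12)"
    proof (cases "h \<noteq> \<one> \<and> ?K \<noteq> carrier G \<and> h \<in> ?K")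
      case True
      have Ksg: "subgroup ?K G" using generate_is_subgroup[OF sxs] .
      have "F i = (\<lambda>S. \<forall>y\<in>S - ?K. generate G {h} #> y \<subseteq> S)"
        using True unfolding F_def hxs by auto
      then show ?thesis using per_event[OF finG nt Ksg _ _ _ p] True by simp
    next
      case False
      have "F i = (\<lambda>S. False)" using False unfolding F_def hxs by auto
      then show ?thesis using rand_prob_False[of G p] by simp
    qed
  qed
  also have "\<dots> = real (order G) ^ (m + 1) * exp (- p * real (order G) / 12)" using cI by simp
  finally show ?thesis .
qed

end


lemma final_real:
  fixes n :: nat and p :: real
  assumes n: "n \<ge> 1" and m: "m = nat \<lfloor>log 2 (real n)\<rfloor>"
    and hp: "25 * (log 2 (real n))^2 / real n \<le> p"
  shows "real n ^ (m + 1) * exp (- p * real n / 12) \<le> exp 3 * exp (- ((log 2 (real n))^2))"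
proof -
  define L where "L = log 2 (real n)"
  have npos: "real n > 0" using n by simp
  have L0: "L \<ge> 0" unfolding L_def using n by simp
  have mL: "real m \<le> L"
  proof -
    have "\<lfloor>L\<rfloor> \<ge> 0" using L0 by simp
    then have "real m = of_int \<lfloor>L\<rfloor>" unfolding m L_def by simp
    then show ?thesis by linarith
  qed
  have lnn: "ln (real n) = L * ln 2" unfolding L_def log_def by simp
  have ln2: "ln (2::real) < 1" by (rule ln_2_less_1)
  have ln2p: "ln (2::real) > 0" by simp
  have pow: "real n ^ (m + 1) = exp (real (m + 1) * ln (real n))"
    using exp_of_nat_mult[of "m + 1" "ln (real n)"] npos by simp
  have e1: "real (m + 1) * ln (real n) \<le> (L + 1) * L"
  proof -
    have "real (m + 1) * ln (real n) \<le> (L + 1) * ln (real n)"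
      using mL n by (intro mult_right_mono) auto
    also have "\<dots> = (L + 1) * L * ln 2" using lnn by simp
    also have "\<dots> \<le> (L + 1) * L" using L0 ln2 ln2p
      by (simp add: mult_left_le)
    finally show ?thesis .
  qed
  have pn: "25 * L^2 \<le> p * real n" using hp npos unfolding L_def by (simp add: pos_divide_le_eq)
  have key: "(L + 1) * L - p * real n / 12 \<le> 3 - L^2"
  proof -
    have "0 \<le> (L - 6)^2" by simp
    then show ?thesis using pn by (simp add: power2_eq_square algebra_simps)
  qed
  have "real n ^ (m + 1) * exp (- p * real n / 12) = exp (real (m + 1) * ln (real n) - p * real n / 12)"
  proof -
    have "exp (real (m + 1) * ln (real n) - p * real n / 12) = exp (real (m + 1) * ln (real n)) * exp (- p * real n / 12)"
      by (simp add: exp_add[symmetric])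
    then show ?thesis using pow by simp
  qed
  also have "\<dots> \<le> exp (3 - L^2)" using e1 key by simp
  also have "\<dots> = exp 3 * exp (- (L^2))" by (simp add: exp_add[symmetric])
  finally show ?thesis unfolding L_def .
qed



theorem mainTheorem2:
  shows "\<exists>C N0. \<forall>(G :: 'a monoid) (p :: real).
     comm_group G \<and> finite (carrier G) \<and> \<not> two_group G \<and> order G \<ge> N0 \<and>
     25 * (log 2 (real (order G)))^2 / real (order G) \<le> p \<and> p \<le> 1/2 \<longrightarrow>
     rand_prob G p (bad_event G) \<le> C * exp (- ((log 2 (real (order G)))^2))"
proof -
  have main: "\<forall>(G :: 'a monoid) (p :: real).
     comm_group G \<and> finite (carrier G) \<and> \<not> two_group G \<and> order G \<ge> 0 \<and>
     25 * (log 2 (real (order G)))^2 / real (order G) \<le> p \<and> p \<le> 1/2 \<longrightarrow>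
     rand_prob G p (bad_event G) \<le> exp 3 * exp (- ((log 2 (real (order G)))^2))"
  proof (intro allI impI)
    fix G :: "'a monoid" and p :: real
    assume a: "comm_group G \<and> finite (carrier G) \<and> \<not> two_group G \<and> order G \<ge> 0 \<and>
     25 * (log 2 (real (order G)))^2 / real (order G) \<le> p \<and> p \<le> 1/2"
    have cg: "comm_group G" using a by blast
    have finG: "finite (carrier G)" using a by blast
    have nt: "\<not> two_group G" using a by blast
    have hp: "25 * (log 2 (real (order G)))^2 / real (order G) \<le> p" using a by blast
    have p2: "p \<le> 1/2" using a by blast
    interpret cgi: comm_group G by (rule cg)
    have npos: "order G > 0" using finG cgi.order_gt_0_iff_finite by blast
    have p0: "0 \<le> p"
    proof -
      have "0 \<le> 25 * (log 2 (real (order G)))^2 / real (order G)" by simp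
      then show ?thesis using hp by linarith
    qed
    define m where "m = nat \<lfloor>log 2 (real (order G))\<rfloor>"
    have "rand_prob G p (bad_event G) \<le> real (order G) ^ (m + 1) * exp (- p * real (order G) / 12)"
      using comm_group.main_bound[OF cg finG nt p0 p2 m_def] .
    also have "\<dots> \<le> exp 3 * exp (- ((log 2 (real (order G)))^2))"
      using final_real[OF _ m_def hp] npos by simp
    finally show "rand_prob G p (bad_event G) \<le> exp 3 * exp (- ((log 2 (real (order G)))^2))" .
  qed
  show ?thesis by (rule exI[of _ "exp 3"], rule exI[of _ "0::nat"], rule main)
qed

end
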